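(* Consider a wave sequence $U_L\xrightarrow{C}U_M\xrightarrow{S}U_R$ with $U_L\neq U_R$, consisting of an admissible $C$-wave from $U_L$ to $U_M$ followed by an admissible $S$-wave from $U_M$ to $U_R$. This wave sequence is compatible if and only if $U_M\in\mathcal{L}\cup\mathcal{T}$ and $0\le S_R\le S^k(U_M)$.
   Context: System: $\partial_t S+\partial_x f(S,C)=0$, $\partial_t[(S+\mathcal{A})C]+\partial_x[f(S,C)C]=0$, with $\mathcal{A}>0$ constant and states $U=(S,C)\in[0,1]^2$. The flux $f$ satisfies: (a) $f\in\mathscr{C}^2$, $f(0,C)=0$, $f(1,C)=1$, $\partial_Sf(0,C)=\partial_Sf(1,C)=0$; (b) for each $C$, $f(\cdot,C)$ is strictly increasing and S-shaped with a single inflection point (convex then concave); (c) $\partial_Cf>0$ for $0<S<1$. Eigenvalues: $\lambda_C(S,C)=f(S,C)/(S+\mathcal{A})$, $\lambda_S(S,C)=\partial_Sf(S,C)$. Transition curve $\mathcal{T}=\{\lambda_S=\lambda_C\}$, $\mathcal{L}=\{\lambda_S>\lambda_C\}$, $\mathcal{R}=\{\lambda_S<\lambda_C\}$; for each $C$, $\mathcal{T}$ contains exactly one point $(S^*(C),C)$ with $S^*(C)\in(0,1)$. For a state $U=(S,C)$, $S^k(U)$ denotes the value $S'\in[0,1]$, $S'\ne S$, with $\lambda_C(S',C)=\lambda_C(U)$ (it lies on the opposite side of $\mathcal{T}$ from $U$); $S^k(U)=+\infty$ if no such $S'$ exists, and $S^k(U)=S^*(C)$ if $S=S^*(C)$.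 An $S$-wave from $U_1$ to $U_2$ requires $C_1=C_2=C$ and is the solution of the scalar Riemann problem $\partial_tS+\partial_xf(S,C)=0$ with left state $S_1$, right state $S_2$, built from shocks satisfying Oleinik's entropy condition and rarefactions; its initial velocity $v_i$ and final velocity $v_f$ are the smallest and largest propagation speeds in that wave fan. A $C$-wave from $U_1$ to $U_2$ is a contact discontinuity with $\lambda_C(U_1)=\lambda_C(U_2)$, travelling with speed $v_i=v_f=\lambda_C(U_1)$; it is admissible iff $U_1,U_2$ both lie in $\mathcal{L}\cup\mathcal{T}$ or both in $\mathcal{R}\cup\mathcal{T}$. A sequence $U_1\xrightarrow{a}U_2\xrightarrow{b}U_3$ is compatible iff $v_f^a\le v_i^b$ (and a longer sequence is compatible iff each consecutive pair is). *)

theory Defs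
  imports "HOL-Analysis.Analysis" "HOL-Library.Extended_Real"
begin

text \<open>States U = (S, C) are pairs of reals; the physical domain is [0,1]^2.\<close>

definition Dom :: "(real \<times> real) set" where
  "Dom = {0..1} \<times> {0..1}"

definition strict_convex_on_real :: "real set \<Rightarrow> (real \<Rightarrow> real) \<Rightarrow> bool" where
  "strict_convex_on_real I g \<longleftrightarrow>
     (\<forall>x\<in>I. \<forall>y\<in>I. \<forall>t::real. x \<noteq> y \<and> 0 < t \<and> t < 1 \<longrightarrow>
        g (t * x + (1 - t) * y) < t * g x + (1 - t) * g y)"

definition strict_concave_on_real :: "real set \<Rightarrow> (real \<Rightarrow> real) \<Rightarrow> bool" where
  "strict_concave_on_real I g \<longleftrightarrow> strict_convex_on_real I (\<lambda>x. - g x)"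

definition flux_C2 :: "(real \<Rightarrow> real \<Rightarrow> real) \<Rightarrow> (real \<Rightarrow> real \<Rightarrow> real) \<Rightarrow> (real \<Rightarrow> real \<Rightarrow> real) \<Rightarrow> bool" where
  "flux_C2 f fS fC \<longleftrightarrow>
     (\<forall>p\<in>Dom. ((\<lambda>q. f (fst q) (snd q)) has_derivative
                 (\<lambda>h. fS (fst p) (snd p) * fst h + fC (fst p) (snd p) * snd h)) (at p within Dom)) \<and>
     (\<exists>fSS fSC fCS fCC :: real \<Rightarrow> real \<Rightarrow> real.
        (\<forall>p\<in>Dom. ((\<lambda>q. fS (fst q) (snd q)) has_derivative
                 (\<lambda>h. fSS (fst p) (snd p) * fst h + fSC (fst p) (snd p) * snd h)) (at p within Dom)) \<and>
        (\<forall>p\<in>Dom. ((\<lambda>q. fC (fst q) (snd q)) has_derivative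
                 (\<lambda>h. fCS (fst p) (snd p) * fst h + fCC (fst p) (snd p) * snd h)) (at p within Dom)) \<and>
        continuous_on Dom (\<lambda>q. fSS (fst q) (snd q)) \<and>
        continuous_on Dom (\<lambda>q. fSC (fst q) (snd q)) \<and>
        continuous_on Dom (\<lambda>q. fCS (fst q) (snd q)) \<and>
        continuous_on Dom (\<lambda>q. fCC (fst q) (snd q)))"

definition lamC :: "(real \<Rightarrow> real \<Rightarrow> real) \<Rightarrow> real \<Rightarrow> real \<times> real \<Rightarrow> real" where
  "lamC f A U = f (fst U) (snd U) / (fst U + A)"

definition lamS :: "(real \<Rightarrow> real \<Rightarrow> real) \<Rightarrow> real \<times> real \<Rightarrow> real" where
  "lamS fS U = fS (fst U) (snd U)"

definition TT :: "(real \<Rightarrow> real \<Rightarrow> real) \<Rightarrow> (real \<Rightarrow> real \<Rightarrow> real) \<Rightarrow> real \<Rightarrow> (real \<times> real) set" where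
  "TT f fS A = {U \<in> Dom. lamS fS U = lamC f A U}"

definition LL :: "(real \<Rightarrow> real \<Rightarrow> real) \<Rightarrow> (real \<Rightarrow> real \<Rightarrow> real) \<Rightarrow> real \<Rightarrow> (real \<times> real) set" where
  "LL f fS A = {U \<in> Dom. lamS fS U > lamC f A U}"

definition RR :: "(real \<Rightarrow> real \<Rightarrow> real) \<Rightarrow> (real \<Rightarrow> real \<Rightarrow> real) \<Rightarrow> real \<Rightarrow> (real \<times> real) set" where
  "RR f fS A = {U \<in> Dom. lamS fS U < lamC f A U}"

definition Sstar :: "(real \<Rightarrow> real \<Rightarrow> real) \<Rightarrow> (real \<Rightarrow> real \<Rightarrow> real) \<Rightarrow> real \<Rightarrow> real \<Rightarrow> real" where
  "Sstar f fS A C = (THE S. 0 < S \<and> S < 1 \<and> (S, C) \<in> TT f fS A)"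

definition Sk :: "(real \<Rightarrow> real \<Rightarrow> real) \<Rightarrow> (real \<Rightarrow> real \<Rightarrow> real) \<Rightarrow> real \<Rightarrow> real \<times> real \<Rightarrow> ereal" where
  "Sk f fS A U =
     (if fst U = Sstar f fS A (snd U) then ereal (fst U)
      else if (\<exists>S'. 0 \<le> S' \<and> S' \<le> 1 \<and> S' \<noteq> fst U \<and> lamC f A (S', snd U) = lamC f A U)
      then ereal (THE S'. 0 \<le> S' \<and> S' \<le> 1 \<and> S' \<noteq> fst U \<and> lamC f A (S', snd U) = lamC f A U)
      else \<infinity>)"

text \<open>Elementary pieces of the wave fan of the scalar Riemann problem (for fixed C):
  an entropy shock from a to b or a rarefaction from a to b.\<close>
datatype piece = Shock real real | Raref real real

fun p_start :: "piece \<Rightarrow> real" where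
  "p_start (Shock a b) = a" | "p_start (Raref a b) = a"

fun p_end :: "piece \<Rightarrow> real" where
  "p_end (Shock a b) = b" | "p_end (Raref a b) = b"

fun p_vi :: "(real \<Rightarrow> real \<Rightarrow> real) \<Rightarrow> (real \<Rightarrow> real \<Rightarrow> real) \<Rightarrow> real \<Rightarrow> piece \<Rightarrow> real" where
  "p_vi f fS C (Shock a b) = (f b C - f a C) / (b - a)"
| "p_vi f fS C (Raref a b) = fS a C"

fun p_vf :: "(real \<Rightarrow> real \<Rightarrow> real) \<Rightarrow> (real \<Rightarrow> real \<Rightarrow> real) \<Rightarrow> real \<Rightarrow> piece \<Rightarrow> real" where
  "p_vf f fS C (Shock a b) = (f b C - f a C) / (b - a)"
| "p_vf f fS C (Raref a b) = fS b C"

text \<open>Oleinik's entropy condition for a shock from u_minus to u_plus with speed sigma: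
  for all u strictly between, (f u - f u_minus)/(u - u_minus) >= sigma >= (f u - f u_plus)/(u - u_plus).\<close>
fun p_valid :: "(real \<Rightarrow> real \<Rightarrow> real) \<Rightarrow> (real \<Rightarrow> real \<Rightarrow> real) \<Rightarrow> real \<Rightarrow> piece \<Rightarrow> bool" where
  "p_valid f fS C (Shock a b) \<longleftrightarrow>
     a \<noteq> b \<and> a \<in> {0..1} \<and> b \<in> {0..1} \<and>
     (\<forall>u. min a b < u \<and> u < max a b \<longrightarrow>
        (f u C - f a C) / (u - a) \<ge> (f b C - f a C) / (b - a) \<and>
        (f b C - f a C) / (b - a) \<ge> (f u C - f b C) / (u - b))"
| "p_valid f fS C (Raref a b) \<longleftrightarrow>
     a \<in> {0..1} \<and> b \<in> {0..1} \<and>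
     (if a \<le> b then (\<forall>x y. a \<le> x \<and> x \<le> y \<and> y \<le> b \<longrightarrow> fS x C \<le> fS y C)
      else (\<forall>x y. b \<le> x \<and> x \<le> y \<and> y \<le> a \<longrightarrow> fS y C \<le> fS x C))"

text \<open>An S-wave from U1 to U2: C1 = C2 = C and a nonempty fan of valid pieces, joined
  end-to-start, going from S1 to S2, with nondecreasing propagation speeds.
  (The trivial wave S1 = S2 is the fan [Raref S1 S1], with speed lambda_S.)\<close>
definition S_wave :: "(real \<Rightarrow> real \<Rightarrow> real) \<Rightarrow> (real \<Rightarrow> real \<Rightarrow> real) \<Rightarrow> real \<times> real \<Rightarrow> real \<times> real \<Rightarrow> piece list \<Rightarrow> bool" where
  "S_wave f fS U1 U2 ps \<longleftrightarrow>
     snd U1 = snd U2 \<and> ps \<noteq> [] \<and>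
     p_start (hd ps) = fst U1 \<and> p_end (last ps) = fst U2 \<and>
     (\<forall>p\<in>set ps. p_valid f fS (snd U1) p) \<and>
     (\<forall>i. Suc i < length ps \<longrightarrow>
        p_end (ps ! i) = p_start (ps ! Suc i) \<and>
        p_vf f fS (snd U1) (ps ! i) \<le> p_vi f fS (snd U1) (ps ! Suc i))"

definition S_vi :: "(real \<Rightarrow> real \<Rightarrow> real) \<Rightarrow> (real \<Rightarrow> real \<Rightarrow> real) \<Rightarrow> real \<times> real \<Rightarrow> piece list \<Rightarrow> real" where
  "S_vi f fS U1 ps = p_vi f fS (snd U1) (hd ps)"

definition S_vf :: "(real \<Rightarrow> real \<Rightarrow> real) \<Rightarrow> (real \<Rightarrow> real \<Rightarrow> real) \<Rightarrow> real \<times> real \<Rightarrow> piece list \<Rightarrow> real" where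
  "S_vf f fS U1 ps = p_vf f fS (snd U1) (last ps)"

definition C_wave_admissible :: "(real \<Rightarrow> real \<Rightarrow> real) \<Rightarrow> (real \<Rightarrow> real \<Rightarrow> real) \<Rightarrow> real \<Rightarrow> real \<times> real \<Rightarrow> real \<times> real \<Rightarrow> bool" where
  "C_wave_admissible f fS A U1 U2 \<longleftrightarrow>
     U1 \<in> Dom \<and> U2 \<in> Dom \<and> lamC f A U1 = lamC f A U2 \<and>
     ((U1 \<in> LL f fS A \<union> TT f fS A \<and> U2 \<in> LL f fS A \<union> TT f fS A) \<or>
      (U1 \<in> RR f fS A \<union> TT f fS A \<and> U2 \<in> RR f fS A \<union> TT f fS A))"

definition C_v :: "(real \<Rightarrow> real \<Rightarrow> real) \<Rightarrow> real \<Rightarrow> real \<times> real \<Rightarrow> real" where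
  "C_v f A U1 = lamC f A U1"

definition compatible_CS :: "(real \<Rightarrow> real \<Rightarrow> real) \<Rightarrow> (real \<Rightarrow> real \<Rightarrow> real) \<Rightarrow> real \<Rightarrow> real \<times> real \<Rightarrow> real \<times> real \<Rightarrow> piece list \<Rightarrow> bool" where
  "compatible_CS f fS A UL UM ps \<longleftrightarrow> C_v f A UL \<le> S_vi f fS UM ps"

definition flux_hyps :: "(real \<Rightarrow> real \<Rightarrow> real) \<Rightarrow> (real \<Rightarrow> real \<Rightarrow> real) \<Rightarrow> (real \<Rightarrow> real \<Rightarrow> real) \<Rightarrow> real \<Rightarrow> bool" where
  "flux_hyps f fS fC A \<longleftrightarrow>
     A > 0 \<and> flux_C2 f fS fC \<and>
     (\<forall>C\<in>{0..1}. f 0 C = 0 \<and> f 1 C = 1 \<and> fS 0 C = 0 \<and> fS 1 C = 0) \<and>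
     (\<forall>C\<in>{0..1}. strict_mono_on {0..1} (\<lambda>S. f S C) \<and>
        (\<exists>sI. 0 < sI \<and> sI < 1 \<and> strict_convex_on_real {0..sI} (\<lambda>S. f S C)
              \<and> strict_concave_on_real {sI..1} (\<lambda>S. f S C))) \<and>
     (\<forall>C\<in>{0..1}. \<forall>S. 0 < S \<and> S < 1 \<longrightarrow> fC S C > 0) \<and>
     (\<forall>C\<in>{0..1}. \<exists>!S. 0 < S \<and> S < 1 \<and> (S, C) \<in> TT f fS A)"

end

theory Submission
  imports Defs
begin

locale fx =
  fixes f fS fC :: "real \<Rightarrow> real \<Rightarrow> real" and A C :: real
  assumes H: "flux_hyps f fS fC A" and Cin: "0 \<le> C" "C \<le> 1"
begin

lemma Apos: "A > 0" using H by (simp add: flux_hyps_def)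

lemma line_deriv:
  assumes "\<forall>p\<in>Dom. ((\<lambda>q. g (fst q) (snd q)) has_derivative
                 (\<lambda>h. g1 (fst p) (snd p) * fst h + g2 (fst p) (snd p) * snd h)) (at p within Dom)"
    and x: "x \<in> {0..1}"
  shows "((\<lambda>s. g s C) has_real_derivative g1 x C) (at x within {0..1})"
proof -
  have img: "(\<lambda>s. (s, C)) ` {0..1} \<subseteq> Dom" using Cin by (auto simp: Dom_def)
  have d1: "((\<lambda>s::real. (s, C)) has_derivative (\<lambda>h. (h, 0))) (at x within {0..1})"
    by (auto intro!: derivative_eq_intros)
  have "((\<lambda>s. (\<lambda>q. g (fst q) (snd q)) (s, C)) has_derivative
      (\<lambda>y. (\<lambda>h. g1 (fst (x,C)) (snd (x,C)) * fst h + g2 (fst (x,C)) (snd (x,C)) * snd h) (y, 0))) (at x within {0..1})"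
    by (rule has_derivative_in_compose2[OF _ img x d1]) (use assms(1) in auto)
  then have "((\<lambda>s. g s C) has_derivative (\<lambda>y. g1 x C * y)) (at x within {0..1})" by simp
  then show ?thesis unfolding has_field_derivative_def .
qed

lemma dF: "x \<in> {0..1} \<Longrightarrow> ((\<lambda>s. f s C) has_real_derivative fS x C) (at x within {0..1})"
  using H line_deriv[of f fS fC x] by (auto simp: flux_hyps_def flux_C2_def)

lemma contG: "continuous_on {0..1} (\<lambda>s. fS s C)"
proof -
  obtain fSS fSC where "\<forall>p\<in>Dom. ((\<lambda>q. fS (fst q) (snd q)) has_derivative
                 (\<lambda>h. fSS (fst p) (snd p) * fst h + fSC (fst p) (snd p) * snd h)) (at p within Dom)"
    using H by (auto simp: flux_hyps_def flux_C2_def)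
  from line_deriv[OF this] show ?thesis
    by (intro has_derivative_continuous_on) (auto simp: has_field_derivative_def)
qed

lemma contF: "continuous_on {0..1} (\<lambda>s. f s C)"
  using dF by (intro has_derivative_continuous_on) (auto simp: has_field_derivative_def)

lemma dF_at: "0 < x \<Longrightarrow> x < 1 \<Longrightarrow> ((\<lambda>s. f s C) has_real_derivative fS x C) (at x)"
  using dF[of x] at_within_interior[of x "{0..1::real}"] by auto

definition "lam s = f s C / (s + A)"
definition "hh s = fS s C * (s + A) - f s C"
definition "SS = Sstar f fS A C"

lemma bnd: "f 0 C = 0" "f 1 C = 1" "fS 0 C = 0" "fS 1 C = 0"
  using H Cin by (auto simp: flux_hyps_def)

lemma smono: "strict_mono_on {0..1} (\<lambda>S. f S C)"
  using H Cin by (auto simp: flux_hyps_def)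

lemma TT_iff: "0 \<le> s \<Longrightarrow> s \<le> 1 \<Longrightarrow> (s, C) \<in> TT f fS A \<longleftrightarrow> hh s = 0"
proof -
  assume s: "0 \<le> s" "s \<le> 1"
  have pos: "s + A > 0" using Apos s by simp
  have "(s, C) \<in> Dom" using s Cin by (auto simp: Dom_def)
  then show ?thesis using pos
    by (auto simp: TT_def lamS_def lamC_def hh_def field_simps)
qed

lemma uniqT: "\<exists>!S. 0 < S \<and> S < 1 \<and> (S, C) \<in> TT f fS A"
  using H Cin by (auto simp: flux_hyps_def)

lemma SS_props: "0 < SS" "SS < 1" "hh SS = 0"
proof -
  have "0 < SS \<and> SS < 1 \<and> (SS, C) \<in> TT f fS A"
    unfolding SS_def Sstar_def using theI'[OF uniqT] .
  then show "0 < SS" "SS < 1" "hh SS = 0" using TT_iff by auto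
qed

lemma SS_uniq: "0 < s \<Longrightarrow> s < 1 \<Longrightarrow> hh s = 0 \<Longrightarrow> s = SS"
  using uniqT SS_props TT_iff by (metis less_eq_real_def)

lemma fpos: "0 < s \<Longrightarrow> s \<le> 1 \<Longrightarrow> f s C > 0"
  using smono[unfolded strict_mono_on_def, rule_format, of 0 s] bnd by auto

lemma contH: "continuous_on {0..1} hh"
  unfolding hh_def using contG contF by (intro continuous_intros) auto

lemma contlam: "continuous_on {0..1} lam"
  unfolding lam_def using contF Apos by (intro continuous_intros) auto

lemma dlam: "0 < x \<Longrightarrow> x < 1 \<Longrightarrow> (lam has_real_derivative hh x / (x + A)^2) (at x)"
proof -
  assume x: "0 < x" "x < 1"
  have ne: "x + A \<noteq> 0" using x Apos by simp
  have "((\<lambda>s. f s C / (s + A)) has_real_derivative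
      (fS x C * (x + A) - f s C * 1) / ((x + A) * (x + A))) (at x)" if "s = x" for s
    using that DERIV_divide[OF dF_at[OF x] DERIV_add[OF DERIV_ident DERIV_const[of A]] ne]
    by simp
  then show ?thesis unfolding lam_def hh_def by (simp add: power2_eq_square)
qed

lemma h_neg: assumes "SS < s" "s \<le> 1" shows "hh s < 0"
proof (rule ccontr)
  assume "\<not> hh s < 0"
  then have "hh s \<ge> 0" by simp
  have h1: "hh 1 = -1" using bnd by (simp add: hh_def)
  then have "s \<noteq> 1" using \<open>hh s \<ge> 0\<close> by auto
  have cs: "continuous_on {s..1} hh"
    using continuous_on_subset[OF contH, of "{s..1}"] SS_props assms by auto
  obtain x where x: "s \<le> x" "x \<le> 1" "hh x = 0"
    using IVT2'[of hh 1 0 s, OF _ _ _ cs] h1 \<open>hh s \<ge> 0\<close> assms by auto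
  then have "x \<noteq> 1" using h1 by auto
  then have "x = SS" using SS_uniq[of x] x assms SS_props by auto
  then show False using x assms by auto
qed

lemma h_pos: assumes "0 < s" "s < SS" shows "hh s > 0"
proof (rule ccontr)
  assume "\<not> hh s > 0"
  moreover have "hh s \<noteq> 0" using SS_uniq[of s] assms SS_props by force
  ultimately have "hh s < 0" by simp
  have allneg: "hh t < 0" if t: "0 < t" "t < SS" for t
  proof (rule ccontr)
    assume "\<not> hh t < 0"
    then have ht: "hh t \<ge> 0" by simp
    have c: "continuous_on {min s t..max s t} hh"
      using continuous_on_subset[OF contH] assms t SS_props by auto
    obtain x where x: "min s t \<le> x" "x \<le> max s t" "hh x = 0"
    proof (cases "s \<le> t")
      case True
      then show ?thesis using IVT'[of hh s 0 t] c ht \<open>hh s < 0\<close> that by auto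
    next
      case False
      then show ?thesis using IVT2'[of hh s 0 t] c ht \<open>hh s < 0\<close> that by auto
    qed
    then have "x = SS" using SS_uniq[of x] x assms t SS_props by auto
    then show False using x assms t by auto
  qed
  have "lam SS < lam 0"
      apply (rule DERIV_neg_imp_decreasing_open[of 0 SS lam])
      using SS_props apply simp
      subgoal for x using dlam[of x] allneg[of x] SS_props Apos
        by (intro exI[of _ "hh x / (x + A)^2"]) (auto simp: divide_neg_pos)
      using continuous_on_subset[OF contlam] SS_props by auto
  moreover have "lam 0 = 0" using bnd by (simp add: lam_def)
  moreover have "lam SS > 0" using fpos[of SS] SS_props Apos by (simp add: lam_def)
  ultimately show False by simp
qed

lemma lam_inc: assumes "0 \<le> x" "x < y" "y \<le> SS" shows "lam x < lam y"
  apply (rule DERIV_pos_imp_increasing_open[of x y lam])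
  using assms apply simp
  subgoal for t using dlam[of t] h_pos[of t] assms SS_props Apos
    by (intro exI[of _ "hh t / (t + A)^2"]) auto
  using continuous_on_subset[OF contlam] assms SS_props by auto

lemma lam_dec: assumes "SS \<le> x" "x < y" "y \<le> 1" shows "lam y < lam x"
  apply (rule DERIV_neg_imp_decreasing_open[of x y lam])
  using assms apply simp
  subgoal for t using dlam[of t] h_neg[of t] assms SS_props Apos
    by (intro exI[of _ "hh t / (t + A)^2"]) (auto simp: divide_neg_pos)
  using continuous_on_subset[OF contlam] assms SS_props by auto

lemma lamC_eq: "lamC f A (s, C) = lam s" by (simp add: lamC_def lam_def)

lemma hh_neg_iff: "0 \<le> s \<Longrightarrow> hh s < 0 \<longleftrightarrow> fS s C < lam s"
  using Apos by (auto simp: hh_def lam_def field_simps)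

lemma LT_iff: "0 \<le> a \<Longrightarrow> a \<le> 1 \<Longrightarrow> (a, C) \<in> LL f fS A \<union> TT f fS A \<longleftrightarrow> fS a C \<ge> lam a"
  using Cin by (auto simp: LL_def TT_def Dom_def lamS_def lamC_eq)

lemma R_iff: "0 \<le> a \<Longrightarrow> a \<le> 1 \<Longrightarrow> (a, C) \<in> RR f fS A \<longleftrightarrow> fS a C < lam a"
  using Cin by (auto simp: RR_def Dom_def lamS_def lamC_eq)

lemma LT_le_SS: assumes "0 \<le> a" "a \<le> 1" "fS a C \<ge> lam a" shows "a \<le> SS"
proof (rule ccontr)
  assume "\<not> a \<le> SS"
  then have "hh a < 0" using h_neg assms by auto
  then show False using hh_neg_iff assms by auto
qed

lemma Sk_cases:
  assumes a: "0 \<le> a" "a \<le> SS"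
  shows "(a = SS \<and> Sk f fS A (a, C) = ereal a)
       \<or> (a \<noteq> SS \<and> (\<exists>S'. SS < S' \<and> S' \<le> 1 \<and> lam S' = lam a \<and> Sk f fS A (a, C) = ereal S'))
       \<or> (a \<noteq> SS \<and> Sk f fS A (a, C) = \<infinity> \<and> (\<forall>S'. 0 \<le> S' \<and> S' \<le> 1 \<and> S' \<noteq> a \<longrightarrow> lam S' \<noteq> lam a))"
proof (cases "a = SS")
  case True
  then show ?thesis by (simp add: Sk_def SS_def)
next
  case False
  have big: "SS < S'" if "0 \<le> S'" "S' \<le> 1" "S' \<noteq> a" "lam S' = lam a" for S'
  proof (rule ccontr)
    assume "\<not> SS < S'"
    then show False using lam_inc[of S' a] lam_inc[of a S'] that a by (cases "S' < a") auto
  qed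
  show ?thesis
  proof (cases "\<exists>S'. 0 \<le> S' \<and> S' \<le> 1 \<and> S' \<noteq> a \<and> lam S' = lam a")
    case True
    then obtain S' where S': "0 \<le> S'" "S' \<le> 1" "S' \<noteq> a" "lam S' = lam a" by auto
    have gt: "SS < S'" using big S' by auto
    have th: "(THE S'. 0 \<le> S' \<and> S' \<le> 1 \<and> S' \<noteq> a \<and> lam S' = lam a) = S'"
    proof (rule the_equality)
      show "0 \<le> S' \<and> S' \<le> 1 \<and> S' \<noteq> a \<and> lam S' = lam a" using S' by auto
    next
      fix x assume x: "0 \<le> x \<and> x \<le> 1 \<and> x \<noteq> a \<and> lam x = lam a"
      then have "SS < x" using big by auto
      show "x = S'"
      proof (rule ccontr)
        assume ne: "x \<noteq> S'"
        have c1: "x < S' \<Longrightarrow> lam S' < lam x" using lam_dec[of x S'] \<open>SS < x\<close> S' by auto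
        have c2: "S' < x \<Longrightarrow> lam x < lam S'" using lam_dec[of S' x] gt x by auto
        show False using ne x S' c1 c2 by (cases "x < S'") auto
      qed
    qed
    have "Sk f fS A (a, C) = ereal S'"
      using False True th by (simp add: Sk_def SS_def lamC_eq)
    then show ?thesis using False gt S' by auto
  next
    case nT: False
    have "Sk f fS A (a, C) = \<infinity>"
      using False nT by (simp add: Sk_def SS_def lamC_eq)
    then show ?thesis using False nT by auto
  qed
qed

lemma Sk_ge: assumes "0 \<le> a" "a \<le> SS" shows "ereal a \<le> Sk f fS A (a, C)"
  using Sk_cases[OF assms] assms by auto

lemma F3: assumes "0 \<le> a" "a \<le> SS" "a \<le> c" "c \<le> 1" "lam c \<ge> lam a"
  shows "ereal c \<le> Sk f fS A (a, C)"
proof -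
  consider (t) "a = SS" "Sk f fS A (a, C) = ereal a"
    | (s) S' where "SS < S'" "S' \<le> 1" "lam S' = lam a" "Sk f fS A (a, C) = ereal S'"
    | (i) "Sk f fS A (a, C) = \<infinity>"
    using Sk_cases[OF assms(1,2)] by blast
  then show ?thesis
  proof cases
    case t
    then show ?thesis using lam_dec[of SS c] assms by (cases "c = a") auto
  next
    case s
    then show ?thesis using lam_dec[of S' c] assms by (cases "c \<le> S'") auto
  next
    case i
    then show ?thesis by simp
  qed
qed

lemma F2: assumes "0 \<le> a" "a \<le> SS" "a < b" "b \<le> 1" "lam b < lam a"
  shows "Sk f fS A (a, C) < ereal b"
proof -
  have bSS: "SS < b" using lam_inc[of a b] assms by (cases "b \<le> SS") auto
  consider (t) "a = SS" "Sk f fS A (a, C) = ereal a"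
    | (s) S' where "SS < S'" "S' \<le> 1" "lam S' = lam a" "Sk f fS A (a, C) = ereal S'"
    | (i) "a \<noteq> SS" "\<forall>S'. 0 \<le> S' \<and> S' \<le> 1 \<and> S' \<noteq> a \<longrightarrow> lam S' \<noteq> lam a"
    using Sk_cases[OF assms(1,2)] by blast
  then show ?thesis
  proof cases
    case t
    then show ?thesis using assms by auto
  next
    case s
    have "\<not> b \<le> S'"
    proof
      assume "b \<le> S'"
      then have "lam S' \<le> lam b" using lam_dec[of b S'] bSS s assms by (cases "b = S'") auto
      then show False using s assms by simp
    qed
    then show ?thesis using s by simp
  next
    case i
    have le: "lam a \<le> lam SS" using lam_inc[of a SS] assms by (cases "a = SS") auto
    have cs: "continuous_on {SS..b} lam"
      using continuous_on_subset[OF contlam] SS_props assms by auto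
    obtain x where x: "SS \<le> x" "x \<le> b" "lam x = lam a"
      using IVT2'[of lam b "lam a" SS, OF _ _ _ cs] le assms bSS by auto
    then have "x \<noteq> a" using i assms(2) by auto
    then show ?thesis using i x assms SS_props by auto
  qed
qed

lemma slope_ge: assumes "0 \<le> u" "u \<le> v" "v \<le> 1" "\<And>x. u \<le> x \<Longrightarrow> x \<le> v \<Longrightarrow> fS x C \<ge> k"
  shows "f v C - f u C \<ge> k * (v - u)"
proof -
  have "(\<lambda>x. f x C - k * x) u \<le> (\<lambda>x. f x C - k * x) v"
  proof (rule DERIV_nonneg_imp_increasing_open[OF assms(2)])
    fix x assume x: "u < x" "x < v"
    have "((\<lambda>x. f x C - k * x) has_real_derivative fS x C - k * 1) (at x)"
      using x assms by (intro DERIV_diff dF_at DERIV_cmult DERIV_ident) auto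
    then show "\<exists>y. ((\<lambda>x. f x C - k * x) has_real_derivative y) (at x) \<and> 0 \<le> y"
      using assms(4)[of x] x by (intro exI[of _ "fS x C - k * 1"]) auto
  next
    show "continuous_on {u..v} (\<lambda>x. f x C - k * x)"
      using continuous_on_subset[OF contF, of "{u..v}"] assms by (intro continuous_intros) auto
  qed
  then show ?thesis by (simp add: algebra_simps)
qed

lemma slope_le: assumes "0 \<le> u" "u \<le> v" "v \<le> 1" "\<And>x. u \<le> x \<Longrightarrow> x \<le> v \<Longrightarrow> fS x C \<le> k"
  shows "f v C - f u C \<le> k * (v - u)"
proof -
  have "(\<lambda>x. f x C - k * x) u \<ge> (\<lambda>x. f x C - k * x) v"
  proof (rule DERIV_nonpos_imp_decreasing_open[OF assms(2)])
    fix x assume x: "u < x" "x < v"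
    have "((\<lambda>x. f x C - k * x) has_real_derivative fS x C - k * 1) (at x)"
      using x assms by (intro DERIV_diff dF_at DERIV_cmult DERIV_ident) auto
    then show "\<exists>y. ((\<lambda>x. f x C - k * x) has_real_derivative y) (at x) \<and> y \<le> 0"
      using assms(4)[of x] x by (intro exI[of _ "fS x C - k * 1"]) auto
  next
    show "continuous_on {u..v} (\<lambda>x. f x C - k * x)"
      using continuous_on_subset[OF contF, of "{u..v}"] assms by (intro continuous_intros) auto
  qed
  then show ?thesis by (simp add: algebra_simps)
qed

lemma valid_range: "p_valid f fS C p \<Longrightarrow> 0 \<le> p_start p \<and> p_start p \<le> 1 \<and> 0 \<le> p_end p \<and> p_end p \<le> 1"
  by (cases p) auto

lemma vi_le_vf: "p_valid f fS C p \<Longrightarrow> p_vi f fS C p \<le> p_vf f fS C p"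
  by (cases p) (auto split: if_splits)

lemma nl: assumes "0 \<le> lo" "lo < hi" "hi \<le> 1" "\<And>u. lo < u \<Longrightarrow> u < hi \<Longrightarrow> f u C = \<alpha> + \<beta> * u"
  shows False
proof -
  obtain sI where sI: "0 < sI" "sI < 1" "strict_convex_on_real {0..sI} (\<lambda>S. f S C)"
      "strict_concave_on_real {sI..1} (\<lambda>S. f S C)"
  proof -
    have "C \<in> {0..1}" using Cin by simp
    then have "\<exists>sI>0. sI < 1 \<and> strict_convex_on_real {0..sI} (\<lambda>S. f S C) \<and> strict_concave_on_real {sI..1} (\<lambda>S. f S C)"
      using H unfolding flux_hyps_def by blast
    then show ?thesis using that by blast
  qed
  show False
  proof (cases "lo < sI")
    case True
    define e where "e = min hi sI"
    define x where "x = (2*lo + e)/3"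
    define y where "y = (lo + 2*e)/3"
    have e: "lo < e" "e \<le> hi" "e \<le> sI" using True assms by (auto simp: e_def)
    have xy: "lo < x" "x < y" "y < e" using e by (auto simp: x_def y_def)
    have mid: "1/2 * x + (1 - 1/2) * y = (x + y) / 2" by simp
    have "f ((x+y)/2) C < 1/2 * f x C + (1 - 1/2) * f y C"
    proof -
      have xyin: "x \<in> {0..sI}" "y \<in> {0..sI}" "x \<noteq> y" using xy e assms by auto
      have "f (1/2 * x + (1 - 1/2) * y) C < 1/2 * f x C + (1 - 1/2) * f y C"
        by (rule sI(3)[unfolded strict_convex_on_real_def, rule_format]) (use xyin in auto)
      then show ?thesis by (simp only: mid)
    qed
    moreover have "f ((x+y)/2) C = \<alpha> + \<beta> * ((x+y)/2)" "f x C = \<alpha> + \<beta> * x" "f y C = \<alpha> + \<beta> * y"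
      using assms(4) xy e by auto
    ultimately show False by (simp add: field_simps)
  next
    case False
    define x where "x = (2*lo + hi)/3"
    define y where "y = (lo + 2*hi)/3"
    have xy: "lo < x" "x < y" "y < hi" using assms by (auto simp: x_def y_def)
    have mid: "1/2 * x + (1 - 1/2) * y = (x + y) / 2" by simp
    have "- f ((x+y)/2) C < 1/2 * (- f x C) + (1 - 1/2) * (- f y C)"
    proof -
      have xyin: "x \<in> {sI..1}" "y \<in> {sI..1}" "x \<noteq> y" using xy False assms by auto
      have "(\<lambda>S. - f S C) (1/2 * x + (1 - 1/2) * y) < 1/2 * (\<lambda>S. - f S C) x + (1 - 1/2) * (\<lambda>S. - f S C) y"
        by (rule sI(4)[unfolded strict_concave_on_real_def strict_convex_on_real_def, rule_format]) (use xyin in auto)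
      then show ?thesis by (simp only: mid)
    qed
    moreover have "f ((x+y)/2) C = \<alpha> + \<beta> * ((x+y)/2)" "f x C = \<alpha> + \<beta> * x" "f y C = \<alpha> + \<beta> * y"
      using assms(4) xy by auto
    ultimately show False by (simp add: field_simps)
  qed
qed

lemma q1: "(d::real) < 0 \<Longrightarrow> N / d \<le> \<sigma> \<Longrightarrow> \<sigma> * d \<le> N" by (simp add: neg_divide_le_eq)
lemma q2: "(d::real) < 0 \<Longrightarrow> \<sigma> \<le> N / d \<Longrightarrow> N \<le> \<sigma> * d" by (simp add: neg_le_divide_eq)
lemma q3: "(d::real) > 0 \<Longrightarrow> N / d \<le> \<sigma> \<Longrightarrow> N \<le> \<sigma> * d" by (simp add: pos_divide_le_eq)
lemma q4: "(d::real) > 0 \<Longrightarrow> \<sigma> \<le> N / d \<Longrightarrow> \<sigma> * d \<le> N" by (simp add: pos_le_divide_eq)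

lemma AL: assumes "p_valid f fS C p" "p_start p < p_end p" "p_start p < u" "u < p_end p"
  shows "f u C \<ge> f (p_end p) C + p_vf f fS C p * (u - p_end p)"
proof (cases p)
  case (Shock a b)
  then have "(f u C - f b C) / (u - b) \<le> (f b C - f a C) / (b - a)" using assms by auto
  from q1[OF _ this] show ?thesis using Shock assms by (auto simp: algebra_simps)
next
  case (Raref a b)
  have "f b C - f u C \<le> fS b C * (b - u)"
    by (rule slope_le) (use Raref assms in auto)
  then show ?thesis using Raref by (auto simp: algebra_simps)
qed

lemma DL: assumes "p_valid f fS C p" "p_end p < p_start p" "p_end p < u" "u < p_start p"
  shows "f u C \<le> f (p_start p) C + p_vi f fS C p * (u - p_start p)"
proof (cases p)
  case (Shock b c)
  then have "(f c C - f b C) / (c - b) \<le> (f u C - f b C) / (u - b)" using assms by auto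
  from q2[OF _ this] show ?thesis using Shock assms by (auto simp: algebra_simps)
next
  case (Raref b c)
  have "f b C - f u C \<ge> fS b C * (b - u)"
    by (rule slope_ge) (use Raref assms in auto)
  then show ?thesis using Raref by (auto simp: algebra_simps)
qed

lemma AR: assumes "p_valid f fS C p" "p_end p < p_start p" "p_end p < u" "u < p_start p"
  shows "f u C \<le> f (p_end p) C + p_vf f fS C p * (u - p_end p)"
proof (cases p)
  case (Shock a b)
  then have "(f u C - f b C) / (u - b) \<le> (f b C - f a C) / (b - a)" using assms by auto
  from q3[OF _ this] show ?thesis using Shock assms by (auto simp: algebra_simps)
next
  case (Raref a b)
  have "f u C - f b C \<le> fS b C * (u - b)"
    by (rule slope_le) (use Raref assms in auto)
  then show ?thesis using Raref by (auto simp: algebra_simps)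
qed

lemma DR: assumes "p_valid f fS C p" "p_start p < p_end p" "p_start p < u" "u < p_end p"
  shows "f u C \<ge> f (p_start p) C + p_vi f fS C p * (u - p_start p)"
proof (cases p)
  case (Shock b c)
  then have "(f c C - f b C) / (c - b) \<le> (f u C - f b C) / (u - b)" using assms by auto
  from q4[OF _ this] show ?thesis using Shock assms by (auto simp: algebra_simps)
next
  case (Raref b c)
  have "f u C - f b C \<ge> fS b C * (u - b)"
    by (rule slope_ge) (use Raref assms in auto)
  then show ?thesis using Raref by (auto simp: algebra_simps)
qed

lemma JL: assumes "p_valid f fS C p" "p_valid f fS C q" "p_start p < p_end p" "p_end p = p_start q"
    "p_end q < p_start q" "p_vf f fS C p \<le> p_vi f fS C q"
  shows False
proof -
  define b where "b = p_end p"
  define m where "m = max (p_start p) (p_end q)"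
  define v where "v = p_vf f fS C p"
  have r: "0 \<le> m" "m < b" "b \<le> 1" using valid_range[OF assms(1)] valid_range[OF assms(2)] assms
    by (auto simp: m_def b_def)
  show False
  proof (rule nl[OF r, of "f b C - v * b" v])
    fix u assume u: "m < u" "u < b"
    have 1: "f u C \<ge> f b C + v * (u - b)" using AL[OF assms(1,3), of u] u by (simp add: m_def b_def v_def)
    have 2: "f u C \<le> f b C + p_vi f fS C q * (u - b)" using DL[OF assms(2,5), of u] u assms(4) by (simp add: m_def b_def)
    have 3: "p_vi f fS C q * (u - b) \<le> v * (u - b)" using assms(6) u by (simp add: v_def mult_right_mono_neg)
    show "f u C = f b C - v * b + v * u" using 1 2 3 by (simp add: algebra_simps)
  qed
qed

lemma JR: assumes "p_valid f fS C p" "p_valid f fS C q" "p_end p < p_start p" "p_end p = p_start q"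
    "p_start q < p_end q" "p_vf f fS C p \<le> p_vi f fS C q"
  shows False
proof -
  define b where "b = p_end p"
  define m where "m = min (p_start p) (p_end q)"
  define v where "v = p_vf f fS C p"
  have r: "0 \<le> b" "b < m" "m \<le> 1" using valid_range[OF assms(1)] valid_range[OF assms(2)] assms
    by (auto simp: m_def b_def)
  show False
  proof (rule nl[OF r, of "f b C - v * b" v])
    fix u assume u: "b < u" "u < m"
    have 1: "f u C \<le> f b C + v * (u - b)" using AR[OF assms(1,3), of u] u by (simp add: m_def b_def v_def)
    have 2: "f u C \<ge> f b C + p_vi f fS C q * (u - b)" using DR[OF assms(2,5), of u] u assms(4) by (simp add: m_def b_def)
    have 3: "v * (u - b) \<le> p_vi f fS C q * (u - b)" using assms(6) u by (simp add: v_def mult_right_mono)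
    show "f u C = f b C - v * b + v * u" using 1 2 3 by (simp add: algebra_simps)
  qed
qed

definition "fan ps \<longleftrightarrow> ps \<noteq> [] \<and> (\<forall>p\<in>set ps. p_valid f fS C p) \<and>
     (\<forall>i. Suc i < length ps \<longrightarrow>
        p_end (ps ! i) = p_start (ps ! Suc i) \<and>
        p_vf f fS C (ps ! i) \<le> p_vi f fS C (ps ! Suc i))"

lemma fan_valid: "fan ps \<Longrightarrow> k < length ps \<Longrightarrow> p_valid f fS C (ps ! k)"
  by (simp add: fan_def)

lemma fan_step: "fan ps \<Longrightarrow> Suc i < length ps \<Longrightarrow>
   p_end (ps ! i) = p_start (ps ! Suc i) \<and> p_vf f fS C (ps ! i) \<le> p_vi f fS C (ps ! Suc i)"
  by (simp add: fan_def)

lemma triv_v: "p_valid f fS C p \<Longrightarrow> p_start p = p_end p \<Longrightarrow> p_vi f fS C p = p_vf f fS C p"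
  by (cases p) auto

lemma chain:
  assumes F: "fan ps" and j: "j < length ps"
  shows "i < j \<Longrightarrow> (\<forall>k. i < k \<and> k < j \<longrightarrow> p_start (ps ! k) = p_end (ps ! k)) \<Longrightarrow>
     p_end (ps ! i) = p_start (ps ! j) \<and> p_vf f fS C (ps ! i) \<le> p_vi f fS C (ps ! j)"
  using j
proof (induction j)
  case 0
  then show ?case by simp
next
  case (Suc j)
  show ?case
  proof (cases "i = j")
    case True
    then show ?thesis using fan_step[OF F, of j] Suc by simp
  next
    case False
    then have ij: "i < j" using Suc by simp
    have IH: "p_end (ps ! i) = p_start (ps ! j) \<and> p_vf f fS C (ps ! i) \<le> p_vi f fS C (ps ! j)"
      using Suc ij by auto
    have tj: "p_start (ps ! j) = p_end (ps ! j)" using Suc ij by auto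
    have "p_vi f fS C (ps ! j) = p_vf f fS C (ps ! j)"
      using triv_v[OF fan_valid[OF F] tj] Suc by simp
    then show ?thesis using IH tj fan_step[OF F, of j] Suc by auto
  qed
qed

lemma no_turn_aux:
  assumes F: "fan ps"
  shows "\<forall>i j. j - i = d \<longrightarrow> i < j \<longrightarrow> j < length ps \<longrightarrow>
     \<not> ((p_start (ps ! i) < p_end (ps ! i) \<and> p_end (ps ! j) < p_start (ps ! j)) \<or>
        (p_end (ps ! i) < p_start (ps ! i) \<and> p_start (ps ! j) < p_end (ps ! j)))"
proof (induction d rule: less_induct)
  case (less d)
  show ?case
  proof (intro allI impI notI)
    fix i j assume d: "j - i = d" and ij: "i < j" and jl: "j < length ps"
      and bad: "(p_start (ps ! i) < p_end (ps ! i) \<and> p_end (ps ! j) < p_start (ps ! j)) \<or>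
        (p_end (ps ! i) < p_start (ps ! i) \<and> p_start (ps ! j) < p_end (ps ! j))"
    show False
    proof (cases "\<exists>k. i < k \<and> k < j \<and> p_start (ps ! k) \<noteq> p_end (ps ! k)")
      case True
      then obtain k where k: "i < k" "k < j" "p_start (ps ! k) \<noteq> p_end (ps ! k)" by auto
      have h1: "\<not> ((p_start (ps ! i) < p_end (ps ! i) \<and> p_end (ps ! k) < p_start (ps ! k)) \<or>
        (p_end (ps ! i) < p_start (ps ! i) \<and> p_start (ps ! k) < p_end (ps ! k)))"
        using less.IH[of "k - i"] d k jl by auto
      have h2: "\<not> ((p_start (ps ! k) < p_end (ps ! k) \<and> p_end (ps ! j) < p_start (ps ! j)) \<or>
        (p_end (ps ! k) < p_start (ps ! k) \<and> p_start (ps ! j) < p_end (ps ! j)))"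
        using less.IH[of "j - k"] d k jl by auto
      show False using h1 h2 k(3) bad by linarith
    next
      case False
      then have c: "p_end (ps ! i) = p_start (ps ! j) \<and> p_vf f fS C (ps ! i) \<le> p_vi f fS C (ps ! j)"
        using chain[OF F jl ij] by auto
      have vi: "p_valid f fS C (ps ! i)" "p_valid f fS C (ps ! j)"
        using fan_valid[OF F] ij jl by auto
      show False using bad JL[OF vi] JR[OF vi] c by auto
    qed
  qed
qed

lemma mono_dir: assumes F: "fan ps"
  shows "(\<forall>k < length ps. p_start (ps ! k) \<le> p_end (ps ! k)) \<or> (\<forall>k < length ps. p_end (ps ! k) \<le> p_start (ps ! k))"
proof (rule ccontr)
  assume "\<not> ?thesis"
  then obtain i j where i: "i < length ps" "p_end (ps ! i) < p_start (ps ! i)"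
    and j: "j < length ps" "p_start (ps ! j) < p_end (ps ! j)" by (auto simp: not_le)
  show False
  proof (cases i j rule: linorder_cases)
    case less
    then show ?thesis using no_turn_aux[OF F, of "j - i"] i j by auto
  next
    case equal
    then show ?thesis using i j by auto
  next
    case greater
    then show ?thesis using no_turn_aux[OF F, of "i - j"] i j by auto
  qed
qed

lemma speeds: assumes F: "fan ps" shows "k < length ps \<Longrightarrow> p_vi f fS C (ps ! 0) \<le> p_vi f fS C (ps ! k)"
proof (induction k)
  case 0 then show ?case by simp
next
  case (Suc k)
  then show ?case using fan_step[OF F, of k] vi_le_vf[OF fan_valid[OF F, of k]] by auto
qed

lemma pos_up: assumes F: "fan ps" and up: "\<forall>k < length ps. p_start (ps ! k) \<le> p_end (ps ! k)"
  shows "k < length ps \<Longrightarrow> p_start (ps ! 0) \<le> p_start (ps ! k) \<and> p_end (ps ! 0) \<le> p_end (ps ! k)"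
proof (induction k)
  case 0 then show ?case by simp
next
  case (Suc k)
  then show ?case using fan_step[OF F, of k] up by force
qed

lemma pos_dn: assumes F: "fan ps" and dn: "\<forall>k < length ps. p_end (ps ! k) \<le> p_start (ps ! k)"
  shows "k < length ps \<Longrightarrow> p_end (ps ! k) \<le> p_start (ps ! 0)"
proof (induction k)
  case 0 then show ?case using dn by simp
next
  case (Suc k)
  then show ?case using fan_step[OF F, of k] dn by force
qed

lemma piece_up_phi: assumes "p_valid f fS C p" "p_start p \<le> p_end p" "l \<le> p_vi f fS C p"
  shows "f (p_end p) C - f (p_start p) C \<ge> l * (p_end p - p_start p)"
proof (cases p)
  case (Shock x y)
  then have xy: "x < y" using assms by auto
  have "(f y C - f x C) / (y - x) * (y - x) = f y C - f x C" using xy by simp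
  moreover have "l * (y - x) \<le> (f y C - f x C) / (y - x) * (y - x)"
    using assms Shock xy by (intro mult_right_mono) auto
  ultimately show ?thesis using Shock by simp
next
  case (Raref x y)
  show ?thesis using Raref assms
    by simp (rule slope_ge, auto intro: order_trans)
qed

lemma phi_up: assumes F: "fan ps" and up: "\<forall>k < length ps. p_start (ps ! k) \<le> p_end (ps ! k)"
    and l: "l \<le> p_vi f fS C (ps ! 0)"
  shows "k < length ps \<Longrightarrow> f (p_end (ps ! k)) C - f (p_start (ps ! 0)) C \<ge> l * (p_end (ps ! k) - p_start (ps ! 0))"
proof (induction k)
  case 0
  then show ?case using piece_up_phi[OF fan_valid[OF F] up[rule_format] l] by simp
next
  case (Suc k)
  have v: "l \<le> p_vi f fS C (ps ! Suc k)" using speeds[OF F Suc.prems] l by simp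
  have "f (p_end (ps ! Suc k)) C - f (p_start (ps ! Suc k)) C \<ge> l * (p_end (ps ! Suc k) - p_start (ps ! Suc k))"
    using piece_up_phi[OF fan_valid[OF F Suc.prems] up[rule_format, OF Suc.prems] v] .
  moreover have "p_start (ps ! Suc k) = p_end (ps ! k)" using fan_step[OF F Suc.prems] by simp
  moreover have "f (p_end (ps ! k)) C - f (p_start (ps ! 0)) C \<ge> l * (p_end (ps ! k) - p_start (ps ! 0))"
    using Suc by simp
  ultimately show ?case by (simp add: algebra_simps)
qed

lemma f_lam: "0 \<le> s \<Longrightarrow> f s C = lam s * (s + A)"
  using Apos by (simp add: lam_def)

lemma R_case: assumes "p_valid f fS C p" "p_start p = a" "fS a C < lam a"
  shows "p_vi f fS C p < lam a"
proof (cases p)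
  case (Raref x y)
  then show ?thesis using assms by simp
next
  case (Shock x b)
  have x: "x = a" using Shock assms by simp
  have ab: "a \<noteq> b" "0 \<le> a" "a \<le> 1" "0 \<le> b" "b \<le> 1" using assms Shock x by auto
  have "hh a < 0" using hh_neg_iff ab assms by auto
  then have aSS: "SS < a"
  proof -
    have "\<not> a \<le> SS"
    proof
      assume "a \<le> SS"
      moreover have "hh 0 = 0" using bnd by (simp add: hh_def)
      ultimately show False using h_pos[of a] \<open>hh a < 0\<close> SS_props ab
        by (cases "a = 0"; cases "a = SS") auto
    qed
    then show ?thesis by simp
  qed
  show ?thesis
  proof (cases "a < b")
    case True
    have "lam b < lam a" using lam_dec[of a b] aSS True ab by auto
    then have "lam b * (b + A) < lam a * (b + A)" using Apos ab by (intro mult_strict_right_mono) auto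
    then have "f b C - f a C < lam a * (b - a)"
      using f_lam[of a] f_lam[of b] ab by (simp add: algebra_simps)
    then show ?thesis using Shock x True by (simp add: pos_divide_less_eq)
  next
    case False
    then have ba: "b < a" using ab by simp
    define u where "u = (max b SS + a) / 2"
    have u: "max b SS < u" "u < a" using aSS ba by (auto simp: u_def)
    have "(f u C - f a C) / (u - a) \<ge> (f b C - f a C) / (b - a)"
      using assms(1) Shock x u ba by auto
    moreover have "lam a < lam u" using lam_dec[of u a] u ab by auto
    then have "lam a * (u + A) < lam u * (u + A)" using Apos ab u by (intro mult_strict_right_mono) auto
    then have "f u C - f a C > lam a * (u - a)"
      using f_lam[of a] f_lam[of u] ab u SS_props
      by (simp add: algebra_simps)
    then have "(f u C - f a C) / (u - a) < lam a" using u by (simp add: neg_divide_less_eq)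
    ultimately show ?thesis using Shock x by simp
  qed
qed

lemma main:
  assumes F: "fan ps" and a: "a = p_start (hd ps)" and c: "c = p_end (last ps)"
  shows "(lam a \<le> p_vi f fS C (hd ps)) \<longleftrightarrow> (fS a C \<ge> lam a \<and> ereal c \<le> Sk f fS A (a, C))"
proof -
  have ne: "ps \<noteq> []" using F by (simp add: fan_def)
  have hd: "hd ps = ps ! 0" using ne by (simp add: hd_conv_nth)
  have last: "last ps = ps ! (length ps - 1)" using ne by (simp add: last_conv_nth)
  have len: "length ps - 1 < length ps" "0 < length ps" using ne by auto
  have v0: "p_valid f fS C (ps ! 0)" using fan_valid[OF F len(2)] .
  have ra: "0 \<le> a" "a \<le> 1" using valid_range[OF v0] a hd by auto
  have rc: "0 \<le> c" "c \<le> 1" using valid_range[OF fan_valid[OF F len(1)]] c last by auto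
  show ?thesis
  proof (cases "fS a C \<ge> lam a")
    case False
    then show ?thesis using R_case[OF v0, of a] a hd by auto
  next
    case LT: True
    have aSS: "a \<le> SS" using LT_le_SS ra LT by auto
    consider (up) "\<forall>k < length ps. p_start (ps ! k) \<le> p_end (ps ! k)"
      | (dn) "\<forall>k < length ps. p_end (ps ! k) \<le> p_start (ps ! k)"
      using mono_dir[OF F] by blast
    then show ?thesis
    proof cases
      case up
      show ?thesis
      proof
        assume l: "lam a \<le> p_vi f fS C (hd ps)"
        have "f c C - f a C \<ge> lam a * (c - a)"
          using phi_up[OF F up, of "lam a", OF _ len(1)] l a c hd last by simp
        then have "lam c * (c + A) \<ge> lam a * (c + A)"
          using f_lam[of a] f_lam[of c] ra rc by (simp add: algebra_simps)
        then have "lam c \<ge> lam a" using Apos rc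
          by (intro mult_right_le_imp_le[of "lam a" "c + A"]) auto
        moreover have "a \<le> c" using pos_up[OF F up len(1)] up[rule_format, OF len(1)] a c hd last by auto
        ultimately show "fS a C \<ge> lam a \<and> ereal c \<le> Sk f fS A (a, C)"
          using F3[OF ra(1) aSS _ rc(2)] LT by auto
      next
        assume r: "fS a C \<ge> lam a \<and> ereal c \<le> Sk f fS A (a, C)"
        show "lam a \<le> p_vi f fS C (hd ps)"
        proof (cases "ps ! 0")
          case (Raref x y)
          then show ?thesis using LT a hd by simp
        next
          case (Shock x b)
          have x: "x = a" using Shock a hd by simp
          have ab: "a < b" using up[rule_format, OF len(2)] Shock x v0 by auto
          have b1: "b \<le> 1" using v0 Shock by simp
          show ?thesis
          proof (rule ccontr)
            assume "\<not> ?thesis"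
            then have "(f b C - f a C) / (b - a) < lam a" using Shock x hd by simp
            then have "f b C - f a C < lam a * (b - a)" using ab by (simp add: pos_divide_less_eq)
            then have "lam b * (b + A) < lam a * (b + A)"
              using f_lam[of a] f_lam[of b] ra ab by (simp add: algebra_simps)
            then have "lam b < lam a" using Apos ra ab
              by (intro mult_right_less_imp_less[of "lam b" "b + A"]) auto
            then have sk: "Sk f fS A (a, C) < ereal b" using F2[OF ra(1) aSS ab b1] by simp
            have "b \<le> c" using pos_up[OF F up len(1)] Shock c last by auto
            then have bc: "ereal b \<le> ereal c" by simp
            have "Sk f fS A (a, C) < Sk f fS A (a, C)"
              using less_le_trans[OF less_le_trans[OF sk bc]] r by blast
            then show False by simp
          qed
        qed
      qed
    next
      case dn
      have ca: "c \<le> a" using pos_dn[OF F dn len(1)] a c hd last by auto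
      have "ereal c \<le> ereal a" using ca by simp
      then have rhs: "ereal c \<le> Sk f fS A (a, C)" using order.trans Sk_ge[OF ra(1) aSS] by blast
      have "lam a \<le> p_vi f fS C (hd ps)"
      proof (cases "ps ! 0")
        case (Raref x y)
        then show ?thesis using LT a hd by simp
      next
        case (Shock x b)
        have x: "x = a" using Shock a hd by simp
        have ab: "b < a" using dn[rule_format, OF len(2)] Shock x v0 by auto
        have b0: "0 \<le> b" using v0 Shock by simp
        have "lam b < lam a" using lam_inc[of b a] ab b0 aSS by simp
        then have "lam b * (b + A) < lam a * (b + A)" using Apos b0 by simp
        then have "f a C - f b C > lam a * (a - b)"
          using f_lam[of a] f_lam[of b] ra b0 by (simp add: algebra_simps)
        then have "(f a C - f b C) / (a - b) > lam a" using ab by (simp add: pos_less_divide_eq)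
        moreover have "(f b C - f a C) / (b - a) = (f a C - f b C) / (a - b)"
          using minus_divide_divide[of "f a C - f b C" "a - b"] by simp
        ultimately show ?thesis using Shock x hd by simp
      qed
      then show ?thesis using LT rhs by simp
    qed
  qed
qed

end

theorem lemma3p1:
  fixes f fS fC :: "real \<Rightarrow> real \<Rightarrow> real" and A :: real
    and UL UM UR :: "real \<times> real" and ps :: "piece list"
  assumes "flux_hyps f fS fC A"
    and "UL \<in> Dom" and "UM \<in> Dom" and "UR \<in> Dom"
    and "UL \<noteq> UR"
    and "C_wave_admissible f fS A UL UM"
    and "S_wave f fS UM UR ps"
  shows "compatible_CS f fS A UL UM ps \<longleftrightarrow>
         (UM \<in> LL f fS A \<union> TT f fS A \<and> 0 \<le> fst UR \<and> ereal (fst UR) \<le> Sk f fS A UM)"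
proof -
  obtain a C where UM: "UM = (a, C)" by (cases UM)
  have Cr: "0 \<le> C" "C \<le> 1" "0 \<le> a" "a \<le> 1" using assms(3) UM by (auto simp: Dom_def)
  interpret fx f fS fC A C using assms(1) Cr by unfold_locales auto
  have sw: "ps \<noteq> [] \<and> (\<forall>p\<in>set ps. p_valid f fS C p) \<and>
     (\<forall>i. Suc i < length ps \<longrightarrow>
        p_end (ps ! i) = p_start (ps ! Suc i) \<and>
        p_vf f fS C (ps ! i) \<le> p_vi f fS C (ps ! Suc i))"
    using assms(7) unfolding S_wave_def UM snd_conv by blast
  have F: "fan ps" unfolding fan_def using sw by blast
  have ha: "a = p_start (hd ps)" "fst UR = p_end (last ps)" using assms(7) UM by (auto simp: S_wave_def)
  have l: "C_v f A UL = lam a" using assms(6) UM by (simp add: C_wave_admissible_def C_v_def lamC_eq)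
  have c: "compatible_CS f fS A UL UM ps \<longleftrightarrow> lam a \<le> p_vi f fS C (hd ps)"
    using l UM by (simp add: compatible_CS_def S_vi_def)
  have r0: "0 \<le> fst UR" using assms(4) by (auto simp: Dom_def)
  show ?thesis using main[OF F ha] c r0 LT_iff[OF Cr(3,4)] UM by auto
qed

end
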